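(* $\frac{n^2}{12}+O(n)\le\mathrm{sat}_\circlearrowright(n,D_2)\le\frac{5n^2}{24}+O(n)$.
   Context: $\Omega_n=\{v_0,\dots,v_{n-1}\}$ with cyclic order $v_0<\dots<v_{n-1}<v_0$ (indices mod $n$). A $3$-cgh on $\Omega_n$ is a family of $3$-subsets of $\Omega_n$. For a $3$-cgh $F$, $H$ contains a copy of $F$ if there is an injection of the vertex set of $F$ into $\Omega_n$ preserving the cyclic order and mapping every edge of $F$ to an edge of $H$. $H$ is $F$-saturated if it contains no copy of $F$ but $H\cup\{e\}$ does for every $e\in\binom{\Omega_n}{3}\setminus H$; $\mathrm{sat}_\circlearrowright(n,F)$ is the minimum number of edges of an $F$-saturated $3$-cgh on $\Omega_n$. $D_2$ is the $3$-cgh on $\Omega_4$ with edges $\{v_0,v_1,v_2\}$ and $\{v_0,v_1,v_3\}$ (two triples sharing a pair whose remaining vertices lie on the same side of the chord through the shared pair). *)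

theory Defs
  imports Complex_Main
begin

text \<open>Vertices of \<Omega>_n are 0,...,n-1 (v_i = i), with the cyclic order
 0 < 1 < ... < n-1 < 0. A 3-cgh on \<Omega>_n is a set of 3-subsets of {..<n}.\<close>

definition triples :: "nat \<Rightarrow> nat set set" where
  "triples n = {e. e \<subseteq> {..<n} \<and> card e = 3}"

text \<open>An injection f of \<Omega>_k into \<Omega>_n preserving the cyclic order:
 after some rotation of \<Omega>_n, f becomes strictly increasing on 0..k-1.\<close>
definition cyc_embedding :: "nat \<Rightarrow> nat \<Rightarrow> (nat \<Rightarrow> nat) \<Rightarrow> bool" where
  "cyc_embedding k n f \<longleftrightarrow>
     (\<forall>i<k. f i < n) \<and> inj_on f {..<k} \<and>
     (\<exists>s. \<forall>i j. i < j \<and> j < k \<longrightarrow> (f i + s) mod n < (f j + s) mod n)"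

definition contains_copy :: "nat \<Rightarrow> nat set set \<Rightarrow> nat \<Rightarrow> nat set set \<Rightarrow> bool" where
  "contains_copy n H k F \<longleftrightarrow>
     (\<exists>f. cyc_embedding k n f \<and> (\<forall>e\<in>F. f ` e \<in> H))"

definition saturated :: "nat \<Rightarrow> nat \<Rightarrow> nat set set \<Rightarrow> nat set set \<Rightarrow> bool" where
  "saturated n k F H \<longleftrightarrow>
     H \<subseteq> triples n \<and> \<not> contains_copy n H k F \<and>
     (\<forall>e \<in> triples n - H. contains_copy n (insert e H) k F)"

definition sat_cyc :: "nat \<Rightarrow> nat \<Rightarrow> nat set set \<Rightarrow> nat" where
  "sat_cyc n k F = (LEAST m. \<exists>H. saturated n k F H \<and> card H = m)"

definition D2 :: "nat set set" where
  "D2 = {{0,1,2},{0,1,3}}"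

end

theory Submission
  imports Defs
begin


lemma modh: "x < (n::nat) \<Longrightarrow> (x + s) mod n = (if x + s mod n < n then x + s mod n else x + s mod n - n)"
proof -
  assume x: "x < n"
  have "(x + s) mod n = (x + s mod n) mod n" by (simp add: mod_add_right_eq)
  moreover have sn: "s mod n < n" using x by simp
  moreover have "\<not> x + s mod n < n \<Longrightarrow> (x + s mod n) mod n = x + s mod n - n"
  proof -
    assume h: "\<not> x + s mod n < n"
    have "(x + s mod n) mod n = (x + s mod n - n) mod n" using h by (simp add: le_mod_geq)
    also have "\<dots> = x + s mod n - n" using x sn by (intro mod_less) linarith
    finally show ?thesis .
  qed
  ultimately show ?thesis by auto
qed

lemma pair_core:
  fixes fi fj t n gi gj :: nat
  assumes "fi < n" "fj < n" "t < n"
    "gi = (if fi + t < n then fi + t else fi + t - n)" "gj = (if fj + t < n then fj + t else fj + t - n)" "gi < gj"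
  shows "(fi + t < n \<longleftrightarrow> fj + t < n) \<and> fi < fj \<or> (\<not> fi + t < n \<and> fj + t < n)"
  using assms by (cases "fi + t < n"; cases "fj + t < n") auto

lemma order_core:
  fixes f0 f1 f2 f3 t n :: nat
  assumes "t < n" "f0 < n" "f1 < n" "f2 < n" "f3 < n"
    "g0 = (if f0 + t < n then f0 + t else f0 + t - n)" "g1 = (if f1 + t < n then f1 + t else f1 + t - n)"
    "g2 = (if f2 + t < n then f2 + t else f2 + t - n)" "g3 = (if f3 + t < n then f3 + t else f3 + t - n)"
    "g0 < g1" "g1 < g2" "(g2::nat) < g3"
  shows "(f0<f1 \<and> f1<f2 \<and> f2<f3) \<or> (f1<f2 \<and> f2<f3 \<and> f3<f0) \<or> (f2<f3 \<and> f3<f0 \<and> f0<f1) \<or> (f3<f0 \<and> f0<f1 \<and> f1<f2)"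
proof -
  have p01: "(f0 + t < n \<longleftrightarrow> f1 + t < n) \<and> f0 < f1 \<or> (\<not> f0 + t < n \<and> f1 + t < n)"
    by (rule pair_core[OF assms(2,3,1,6,7,10)])
  have p12: "(f1 + t < n \<longleftrightarrow> f2 + t < n) \<and> f1 < f2 \<or> (\<not> f1 + t < n \<and> f2 + t < n)"
    by (rule pair_core[OF assms(3,4,1,7,8,11)])
  have p23: "(f2 + t < n \<longleftrightarrow> f3 + t < n) \<and> f2 < f3 \<or> (\<not> f2 + t < n \<and> f3 + t < n)"
    by (rule pair_core[OF assms(4,5,1,8,9,12)])
  have cross: "\<And>x y. \<not> x + t < n \<Longrightarrow> y + t < n \<Longrightarrow> y < x" by linarith
  show ?thesis
  proof (cases "f0 + t < n")
    case True
    then show ?thesis using p01 p12 p23 by blast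
  next
    case w0: False
    show ?thesis
    proof (cases "f1 + t < n")
      case True
      then show ?thesis using p01 p12 p23 w0 cross[OF w0, of f2] cross[OF w0, of f3] by blast
    next
      case w1: False
      show ?thesis
      proof (cases "f2 + t < n")
        case True
        then show ?thesis using p01 p12 p23 w0 w1 cross[OF w1, of f3] cross[OF w0, of f3] cross[OF w1, of f2] by blast
      next
        case w2: False
        show ?thesis
        proof (cases "f3 + t < n")
          case True
          then show ?thesis using p01 p12 p23 w0 w1 w2 cross[OF w2, of f3] cross[OF w1, of f3] cross[OF w0, of f3] by blast
        next
          case False
          then show ?thesis using p01 p12 p23 w0 w1 w2 by blast
        qed
      qed
    qed
  qed
qed

lemma sorted_unique:
  fixes p q r p' q' r' :: nat
  assumes "p<q" "q<r" "p'<q'" "q'<r'" "{p,q,r} = {p',q',r'}"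
  shows "p=p' \<and> q=q' \<and> r=r'"
proof -
  have "p \<in> {p',q',r'}" "q \<in> {p',q',r'}" "r \<in> {p',q',r'}" "p' \<in> {p,q,r}" "q' \<in> {p,q,r}" "r' \<in> {p,q,r}"
    using assms(5) by blast+
  then show ?thesis using assms(1-4) by auto
qed

lemma lt4: "(j::nat) < 4 \<Longrightarrow> j = 0 \<or> j = 1 \<or> j = 2 \<or> j = 3" by arith

lemma copy_of:
  assumes "a0<n" "a1<n" "a2<n" "a3<n"
    "(a0+s) mod n < (a1+s) mod n" "(a1+s) mod n < (a2+s) mod n" "(a2+s) mod n < (a3+s) mod n"
    "{a0,a1,a2} \<in> H" "{a0,a1,a3} \<in> H"
  shows "contains_copy n H 4 D2"
proof -
  define f where "f = (\<lambda>i::nat. if i=0 then a0 else if i=1 then a1 else if i=2 then a2 else a3)"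
  have mono: "\<forall>i j. i < j \<and> j < 4 \<longrightarrow> (f i + s) mod n < (f j + s) mod n"
  proof (intro allI impI)
    fix i j :: nat assume h: "i < j \<and> j < 4"
    then have "i < 4" by simp
    from lt4[OF this] lt4[of j] h show "(f i + s) mod n < (f j + s) mod n"
      using assms(5-7) unfolding f_def by (auto elim: less_trans)
  qed
  have inj: "inj_on f {..<4}"
  proof (rule inj_onI)
    fix i j assume "i \<in> {..<(4::nat)}" "j \<in> {..<(4::nat)}" "f i = f j"
    then show "i = j" using mono by (metis lessThan_iff less_irrefl linorder_neqE_nat)
  qed
  have lt: "\<forall>i<4. f i < n" using assms(1-4) by (auto simp: f_def)
  have "cyc_embedding 4 n f"
    unfolding cyc_embedding_def using lt inj mono by blast
  moreover have "\<forall>e\<in>D2. f ` e \<in> H" using assms(8,9) by (auto simp: D2_def f_def insert_commute)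
  ultimately show ?thesis unfolding contains_copy_def by blast
qed

lemma modA: "q \<le> x \<Longrightarrow> x < (n::nat) \<Longrightarrow> (x + (n - q)) mod n = x - q"
proof -
  assume a: "q \<le> x" "x < n"
  have "(x + (n - q)) mod n = (x + (n-q) - n) mod n" using a by (simp add: le_mod_geq)
  also have "\<dots> = x - q" using a by simp
  finally show ?thesis .
qed

lemma modB: "x < q \<Longrightarrow> q \<le> (n::nat) \<Longrightarrow> (x + (n - q)) mod n = x + (n - q)"
  by simp

lemma modA': "q \<le> x \<Longrightarrow> x < (n::nat) \<Longrightarrow> (x + n - q) mod n = x - q"
  using modA[of q x n] by simp

lemma modB': "x < q \<Longrightarrow> q \<le> (n::nat) \<Longrightarrow> (x + n - q) mod n = x + n - q"
  by simp

lemma copyR0: "p<q \<Longrightarrow> q<r \<Longrightarrow> r<t \<Longrightarrow> t<n \<Longrightarrow> {p,q,r} \<in> H \<Longrightarrow> {p,q,t} \<in> H \<Longrightarrow> contains_copy n H 4 D2"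
  by (rule copy_of[of p n q r t 0 H]) auto

lemma copyR1: "p<q \<Longrightarrow> q<r \<Longrightarrow> r<t \<Longrightarrow> t<n \<Longrightarrow> {q,r,t} \<in> H \<Longrightarrow> {q,r,p} \<in> H \<Longrightarrow> contains_copy n H 4 D2"
  apply (rule copy_of[of q n r t p "n-q" H])
  apply (simp_all add: modA' modB')
  done

lemma copyR2: "p<q \<Longrightarrow> q<r \<Longrightarrow> r<t \<Longrightarrow> t<n \<Longrightarrow> {r,t,p} \<in> H \<Longrightarrow> {r,t,q} \<in> H \<Longrightarrow> contains_copy n H 4 D2"
  apply (rule copy_of[of r n t p q "n-r" H])
  apply (simp_all add: modA' modB')
  done

lemma copyR3: "p<q \<Longrightarrow> q<r \<Longrightarrow> r<t \<Longrightarrow> t<n \<Longrightarrow> {t,p,q} \<in> H \<Longrightarrow> {t,p,r} \<in> H \<Longrightarrow> contains_copy n H 4 D2"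
  apply (rule copy_of[of t n p q r "n-t" H])
  apply (simp_all add: modA' modB')
  done

lemma emb_fwd:
  assumes "cyc_embedding 4 n f"
  shows "\<exists>P Q R T. P<Q \<and> Q<R \<and> R<T \<and> T<n \<and>
     ((f 0, f 1, f 2, f 3) = (P,Q,R,T) \<or> (f 0, f 1, f 2, f 3) = (T,P,Q,R) \<or>
      (f 0, f 1, f 2, f 3) = (R,T,P,Q) \<or> (f 0, f 1, f 2, f 3) = (Q,R,T,P))"
proof -
  from assms obtain s where lt: "\<forall>i<4. f i < n" and
    m: "\<forall>i j. i < j \<and> j < 4 \<longrightarrow> (f i + s) mod n < (f j + s) mod n"
    unfolding cyc_embedding_def by blast
  have f: "f 0 < n" "f 1 < n" "f 2 < n" "f 3 < n" using lt by auto
  have c: "(f 0 + s) mod n < (f 1 + s) mod n" "(f 1 + s) mod n < (f 2 + s) mod n" "(f 2 + s) mod n < (f 3 + s) mod n"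
    using m by auto
  have sn: "s mod n < n" using f by simp
  have o: "(f 0<f 1 \<and> f 1<f 2 \<and> f 2<f 3) \<or> (f 1<f 2 \<and> f 2<f 3 \<and> f 3<f 0) \<or> (f 2<f 3 \<and> f 3<f 0 \<and> f 0<f 1) \<or> (f 3<f 0 \<and> f 0<f 1 \<and> f 1<f 2)"
    by (rule order_core[OF sn f modh[OF f(1)] modh[OF f(2)] modh[OF f(3)] modh[OF f(4)] c])
  then show ?thesis using f by blast
qed

lemma copy_fwd:
  assumes "contains_copy n H 4 D2"
  shows "\<exists>P Q R T. P<Q \<and> Q<R \<and> R<T \<and> T<n \<and> (({P,Q,R}\<in>H \<and> {P,Q,T}\<in>H) \<or> ({Q,R,T}\<in>H \<and> {P,Q,R}\<in>H) \<or>
     ({P,R,T}\<in>H \<and> {Q,R,T}\<in>H) \<or> ({P,Q,T}\<in>H \<and> {P,R,T}\<in>H))"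
proof -
  from assms obtain f where e: "cyc_embedding 4 n f" and h: "\<forall>e\<in>D2. f ` e \<in> H"
    unfolding contains_copy_def by blast
  have h1: "{f 0, f 1, f 2} \<in> H" "{f 0, f 1, f 3} \<in> H" using h by (auto simp: D2_def)
  from emb_fwd[OF e] obtain P Q R T where o: "P<Q" "Q<R" "R<T" "T<n" and
    c: "((f 0, f 1, f 2, f 3) = (P,Q,R,T) \<or> (f 0, f 1, f 2, f 3) = (T,P,Q,R) \<or>
      (f 0, f 1, f 2, f 3) = (R,T,P,Q) \<or> (f 0, f 1, f 2, f 3) = (Q,R,T,P))" by blast
  from c h1 have "(({P,Q,R}\<in>H \<and> {P,Q,T}\<in>H) \<or> ({Q,R,T}\<in>H \<and> {P,Q,R}\<in>H) \<or>
     ({P,R,T}\<in>H \<and> {Q,R,T}\<in>H) \<or> ({P,Q,T}\<in>H \<and> {P,R,T}\<in>H))"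
    by (auto simp: insert_commute)
  with o show ?thesis by blast
qed

definition cond :: "nat \<Rightarrow> nat \<Rightarrow> nat \<Rightarrow> nat \<Rightarrow> nat \<Rightarrow> bool" where
  "cond n a p q r \<longleftrightarrow> (1 \<le> q-p \<and> q-p \<le> a \<and> r-q = q-p+a) \<or> (1 \<le> r-q \<and> r-q \<le> a \<and> n-r+p = r-q+a)
      \<or> (1 \<le> n-r+p \<and> n-r+p \<le> a \<and> q-p = n-r+p+a)"

definition Hc :: "nat \<Rightarrow> nat \<Rightarrow> nat set set" where
  "Hc n a = {e. \<exists>p q r. p<q \<and> q<r \<and> r<n \<and> e = {p,q,r} \<and> cond n a p q r}"

lemma mem_Hc: "p<q \<Longrightarrow> q<r \<Longrightarrow> r<n \<Longrightarrow> {p,q,r} \<in> Hc n a \<longleftrightarrow> cond n a p q r"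
proof
  assume o: "p<q" "q<r" "r<n" and "{p,q,r} \<in> Hc n a"
  then obtain p' q' r' where "p'<q'" "q'<r'" "{p,q,r} = {p',q',r'}" "cond n a p' q' r'"
    unfolding Hc_def by blast
  with o sorted_unique[of p q r p' q' r'] show "cond n a p q r" by auto
next
  assume "p<q" "q<r" "r<n" "cond n a p q r"
  then show "{p,q,r} \<in> Hc n a" unfolding Hc_def by blast
qed

definition condI :: "int \<Rightarrow> int \<Rightarrow> int \<Rightarrow> int \<Rightarrow> bool" where
  "condI a x y w \<longleftrightarrow> (1 \<le> x \<and> x \<le> a \<and> y = x+a) \<or> (1 \<le> y \<and> y \<le> a \<and> w = y+a) \<or> (1 \<le> w \<and> w \<le> a \<and> x = w+a)"

lemma cond_condI: "p<q \<Longrightarrow> q<r \<Longrightarrow> r<n \<Longrightarrow> cond n a p q r = condI (int a) (int q - int p) (int r - int q) (int n - int r + int p)"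
proof -
  assume o: "p<q" "q<r" "r<n"
  have e: "int (q - p) = int q - int p" "int (r - q) = int r - int q" "int (n - r + p) = int n - int r + int p"
    using o by (simp_all add: of_nat_diff)
  have d1: "((1::nat) \<le> x \<and> x \<le> b \<and> y = x + b) = (1 \<le> int x \<and> int x \<le> int b \<and> int y = int x + int b)" for x y b
    by linarith
  show ?thesis unfolding cond_def condI_def d1 e ..
qed

lemma Hc_nocopy:
  assumes "1 \<le> a" "5*a < n"
  shows "\<not> contains_copy n (Hc n a) 4 D2"
proof
  assume "contains_copy n (Hc n a) 4 D2"
  from copy_fwd[OF this] obtain P Q R T where o: "P<Q" "Q<R" "R<T" "T<n" and
    c: "(({P,Q,R}\<in>Hc n a \<and> {P,Q,T}\<in>Hc n a) \<or> ({Q,R,T}\<in>Hc n a \<and> {P,Q,R}\<in>Hc n a) \<or>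
     ({P,R,T}\<in>Hc n a \<and> {Q,R,T}\<in>Hc n a) \<or> ({P,Q,T}\<in>Hc n a \<and> {P,R,T}\<in>Hc n a))" by blast
  define p q r t N A where "p = int P" "q = int Q" "r = int R" "t = int T" "N = int n" "A = int a"
  have oi: "p<q" "q<r" "r<t" "t<N" "0 \<le> p" "1 \<le> A" "5*A < N" using o assms by (auto simp: p_q_r_t_N_A_def)
  have m: "{P,Q,R}\<in>Hc n a \<longleftrightarrow> condI A (q-p) (r-q) (N-r+p)" "{P,Q,T}\<in>Hc n a \<longleftrightarrow> condI A (q-p) (t-q) (N-t+p)"
    "{Q,R,T}\<in>Hc n a \<longleftrightarrow> condI A (r-q) (t-r) (N-t+q)" "{P,R,T}\<in>Hc n a \<longleftrightarrow> condI A (r-p) (t-r) (N-t+p)"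
    using mem_Hc[of P Q R n a] mem_Hc[of P Q T n a] mem_Hc[of Q R T n a] mem_Hc[of P R T n a] o
      cond_condI[of P Q R n a] cond_condI[of P Q T n a] cond_condI[of Q R T n a] cond_condI[of P R T n a]
    by (auto simp: p_q_r_t_N_A_def)
  have f1: "\<not> (condI A (q-p) (r-q) (N-r+p) \<and> condI A (q-p) (t-q) (N-t+p))"
    using oi unfolding condI_def by (smt (verit))
  have f2: "\<not> (condI A (r-q) (t-r) (N-t+q) \<and> condI A (q-p) (r-q) (N-r+p))"
    using oi unfolding condI_def by (smt (verit))
  have f3: "\<not> (condI A (r-p) (t-r) (N-t+p) \<and> condI A (r-q) (t-r) (N-t+q))"
    using oi unfolding condI_def by (smt (verit))
  have f4: "\<not> (condI A (q-p) (t-q) (N-t+p) \<and> condI A (r-p) (t-r) (N-t+p))"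
    using oi unfolding condI_def by (smt (verit))
  show False using c m f1 f2 f3 f4 by blast
qed

lemma mkz1: "p<q \<Longrightarrow> 0 \<le> e \<Longrightarrow> int q < e \<Longrightarrow> e < int n \<Longrightarrow> e \<noteq> int r \<Longrightarrow>
  condI (int a) (int q - int p) (e - int q) (int n - e + int p) \<Longrightarrow> \<exists>z. q<z \<and> z<n \<and> z\<noteq>r \<and> cond n a p q z"
  by (rule exI[of _ "nat e"]) (auto simp: cond_condI)

lemma mkz2: "p<q \<Longrightarrow> q < n \<Longrightarrow> 0 \<le> e \<Longrightarrow> e < int p \<Longrightarrow>
  condI (int a) (int p - e) (int q - int p) (int n - int q + e) \<Longrightarrow> \<exists>z. z<p \<and> cond n a z p q"
  by (rule exI[of _ "nat e"]) (auto simp: cond_condI)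

lemma mkz3: "q<r \<Longrightarrow> 0 \<le> e \<Longrightarrow> int r < e \<Longrightarrow> e < int n \<Longrightarrow>
  condI (int a) (int r - int q) (e - int r) (int n - e + int q) \<Longrightarrow> \<exists>z. r<z \<and> z<n \<and> cond n a q r z"
  by (rule exI[of _ "nat e"]) (auto simp: cond_condI)

lemma mkz4: "q<r \<Longrightarrow> r<n \<Longrightarrow> 0 \<le> e \<Longrightarrow> e < int q \<Longrightarrow> e \<noteq> int p \<Longrightarrow>
  condI (int a) (int q - e) (int r - int q) (int n - int r + e) \<Longrightarrow> \<exists>z. z<q \<and> z\<noteq>p \<and> cond n a z q r"
  by (rule exI[of _ "nat e"]) (auto simp: cond_condI)

lemma mkz5: "r<n \<Longrightarrow> int p < e \<Longrightarrow> e < int r \<Longrightarrow> e \<noteq> int q \<Longrightarrow>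
  condI (int a) (e - int p) (int r - e) (int n - int r + int p) \<Longrightarrow> \<exists>z. p<z \<and> z<r \<and> z\<noteq>q \<and> cond n a p z r"
  by (rule exI[of _ "nat e"]) (auto simp: cond_condI)

lemma sat_arith:
  fixes p q r n a :: nat
  assumes o: "p<q" "q<r" "r<n" and nc0: "\<not> cond n a p q r" and a: "1 \<le> a" "5*a < n" "n \<le> 6*a"
  shows "(\<exists>z. q<z \<and> z<n \<and> z\<noteq>r \<and> cond n a p q z) \<or> (\<exists>z. z<p \<and> cond n a z p q) \<or>
    (\<exists>z. r<z \<and> z<n \<and> cond n a q r z) \<or> (\<exists>z. z<q \<and> z\<noteq>p \<and> cond n a z q r) \<or>
    (\<exists>z. p<z \<and> z<r \<and> z\<noteq>q \<and> cond n a p z r)"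
proof -
  define P Q R N A where "P = int p" "Q = int q" "R = int r" "N = int n" "A = int a"
  have oi: "P<Q" "Q<R" "R<N" "0 \<le> P" "1 \<le> A" "5*A < N" "N \<le> 6*A" using o a by (auto simp: P_Q_R_N_A_def)
  have nc: "\<not> condI A (Q-P) (R-Q) (N-R+P)" using nc0 cond_condI[OF o, of a] by (simp add: P_Q_R_N_A_def)
  note defs = P_Q_R_N_A_def[symmetric]
  have c: "Q - P \<le> 2*A \<or> R - Q \<le> 2*A \<or> N - R + P \<le> 2*A" using oi by linarith
  show ?thesis
  proof (cases "Q - P \<le> 2*A")
    case c1: True
    show ?thesis
    proof (cases "Q - P \<le> A")
      case True
      show ?thesis
      proof (cases "Q + (Q-P) + A < N")
        case True
        note h = `Q - P \<le> A` True
          show ?thesis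
        apply (rule disjI1, rule mkz1[where e="Q + (Q-P) + A"])
        using o apply linarith
        using h oi nc unfolding defs condI_def by (smt (verit))+
      next
        case False
        note h = `Q - P \<le> A` False
      show ?thesis
        apply (rule disjI2, rule disjI1, rule mkz2[where e="Q + (Q-P) + A - N"])
        using o apply linarith
        using o apply linarith
        using h oi nc unfolding defs condI_def by (smt (verit))+
      qed
    next
      case False
      then have a1: "A < Q - P" by linarith
      show ?thesis
      proof (cases "Q - P - A \<le> P")
        case True
        note h = a1 c1 True
      show ?thesis
        apply (rule disjI2, rule disjI1, rule mkz2[where e="P - (Q-P-A)"])
        using o apply linarith
        using o apply linarith
        using h oi nc unfolding defs condI_def by (smt (verit))+
      next
        case False
        note h = a1 c1 False
      show ?thesis
        apply (rule disjI1, rule mkz1[where e="P + N - (Q-P-A)"])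
        using o apply linarith
        using h oi nc unfolding defs condI_def by (smt (verit))+
      qed
    qed
  next
    case nc1: False
    show ?thesis
    proof (cases "R - Q \<le> 2*A")
      case c2: True
      show ?thesis
      proof (cases "R - Q \<le> A")
        case True
        show ?thesis
        proof (cases "R + (R-Q) + A < N")
          case True
          note h = `R - Q \<le> A` True
      show ?thesis
        apply (rule disjI2, rule disjI2, rule disjI1, rule mkz3[where e="R + (R-Q) + A"])
        using o apply linarith
        using h oi nc unfolding defs condI_def by (smt (verit))+
        next
          case False
          note h = `R - Q \<le> A` False
      show ?thesis
        apply (rule disjI2, rule disjI2, rule disjI2, rule disjI1, rule mkz4[where e="R + (R-Q) + A - N"])
        using o apply linarith
        using o apply linarith
        using h oi nc unfolding defs condI_def by (smt (verit))+
        qed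
      next
        case False
        then have a1: "A < R - Q" by linarith
        show ?thesis
        proof (cases "R - Q - A \<le> Q")
          case True
          note h = a1 c2 True
      show ?thesis
        apply (rule disjI2, rule disjI2, rule disjI2, rule disjI1, rule mkz4[where e="Q - (R-Q-A)"])
        using o apply linarith
        using o apply linarith
        using h oi nc unfolding defs condI_def by (smt (verit))+
        next
          case False
          note h = a1 c2 False
      show ?thesis
        apply (rule disjI2, rule disjI2, rule disjI1, rule mkz3[where e="Q + N - (R-Q-A)"])
        using o apply linarith
        using h oi nc unfolding defs condI_def by (smt (verit))+
        qed
      qed
    next
      case False
      then have c3: "N - R + P \<le> 2*A" using c nc1 by linarith
      show ?thesis
      proof (cases "N - R + P \<le> A")
        case True
        note h = True
      show ?thesis
        apply (rule disjI2, rule disjI2, rule disjI2, rule disjI2, rule mkz5[where e="P + (N-R+P) + A"])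
        using o apply linarith
        using h oi nc unfolding defs condI_def by (smt (verit))+
      next
        case False
        then have a1: "A < N - R + P" by linarith
        note h = a1 c3
      show ?thesis
        apply (rule disjI2, rule disjI2, rule disjI2, rule disjI2, rule mkz5[where e="R - (N-R+P-A)"])
        using o apply linarith
        using h oi nc unfolding defs condI_def by (smt (verit))+
      qed
    qed
  qed
qed



lemma sort3: assumes "e \<in> triples n" shows "\<exists>p q r. p<q \<and> q<r \<and> r<n \<and> e = {p,q,r}"
proof -
  from assms have sub: "e \<subseteq> {..<n}" and c: "card e = 3" unfolding triples_def by auto
  from c obtain x y z where e: "e = {x,y,z}" "x\<noteq>y" "y\<noteq>z" "x\<noteq>z" unfolding card_3_iff by blast
  have lt: "x<n" "y<n" "z<n" using sub e by auto
  have h3: "\<And>p q r. p<q \<Longrightarrow> q<r \<Longrightarrow> r<n \<Longrightarrow> e = {p,q,r} \<Longrightarrow> ?thesis" by blast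
  show ?thesis
  proof (cases "x<y")
    case True
    then show ?thesis
    proof (cases "y<z")
      case True
      then show ?thesis using `x<y` lt e by (intro h3[of x y z]) auto
    next
      case False
      then have "z<y" using e by simp
      then show ?thesis
      proof (cases "x<z")
        case True then show ?thesis using `z<y` lt e by (intro h3[of x z y]) auto
      next
        case False then have "z<x" using e by simp
        then show ?thesis using `x<y` lt e by (intro h3[of z x y]) auto
      qed
    qed
  next
    case False
    then have "y<x" using e by simp
    then show ?thesis
    proof (cases "x<z")
      case True
      then show ?thesis using `y<x` lt e by (intro h3[of y x z]) auto
    next
      case False
      then have "z<x" using e by simp
      then show ?thesis
      proof (cases "y<z")
        case True then show ?thesis using `z<x` lt e by (intro h3[of y z x]) auto
      next
        case False then have "z<y" using e by simp
        then show ?thesis using `y<x` lt e by (intro h3[of z y x]) auto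
      qed
    qed
  qed
qed

lemma Hc_sub: "Hc n a \<subseteq> triples n"
  unfolding Hc_def triples_def by auto

lemma Hc_sat:
  assumes a: "1 \<le> a" "5*a < n" "n \<le> 6*a"
  shows "saturated n 4 D2 (Hc n a)"
  unfolding saturated_def
proof (intro conjI ballI)
  show "Hc n a \<subseteq> triples n" by (rule Hc_sub)
  show "\<not> contains_copy n (Hc n a) 4 D2" using Hc_nocopy a by blast
  fix e assume e: "e \<in> triples n - Hc n a"
  then obtain p q r where o: "p<q" "q<r" "r<n" and ee: "e = {p,q,r}" using sort3 by blast
  have nc: "\<not> cond n a p q r" using e ee mem_Hc[OF o] by blast
  define H' where "H' = insert e (Hc n a)"
  have m0: "{p,q,r} \<in> H'" using ee H'_def by simp
  have mH: "\<And>x y z. x<y \<Longrightarrow> y<z \<Longrightarrow> z<n \<Longrightarrow> cond n a x y z \<Longrightarrow> {x,y,z} \<in> H'"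
    using mem_Hc H'_def by blast
  from sat_arith[OF o nc a] have "contains_copy n H' 4 D2"
  proof (elim disjE exE conjE)
    fix z assume z: "q<z" "z<n" "z\<noteq>r" "cond n a p q z"
    have m: "{p,q,z} \<in> H'" using mH[OF o(1) z(1) z(2) z(4)] .
    show ?thesis
    proof (cases "r<z")
      case True then show ?thesis using copyR0[OF o(1,2) True z(2) m0 m] by blast
    next
      case False then have "z<r" using z by simp
      then show ?thesis using copyR0[OF o(1) z(1) `z<r` o(3) m m0] by blast
    qed
  next
    fix z assume z: "z<p" "cond n a z p q"
    have m: "{z,p,q} \<in> H'" using mH[OF z(1) o(1) _ z(2)] o by simp
    then have m': "{p,q,z} \<in> H'" by (simp add: insert_commute)
    show ?thesis using copyR1[OF z(1) o(1,2,3) m0 m'] by blast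
  next
    fix z assume z: "r<z" "z<n" "cond n a q r z"
    have m: "{q,r,z} \<in> H'" using mH[OF o(2) z(1) z(2) z(3)] .
    have m': "{q,r,p} \<in> H'" using m0 by (simp add: insert_commute)
    show ?thesis using copyR1[OF o(1,2) z(1,2) m m'] by blast
  next
    fix z assume z: "z<q" "z\<noteq>p" "cond n a z q r"
    have m: "{z,q,r} \<in> H'" using mH[OF z(1) o(2) o(3) z(3)] .
    have m': "{q,r,z} \<in> H'" "{q,r,p} \<in> H'" using m m0 by (simp_all add: insert_commute)
    show ?thesis
    proof (cases "z<p")
      case True then show ?thesis using copyR2[OF True o(1,2,3) m'(1) m'(2)] by blast
    next
      case False then have "p<z" using z by simp
      then show ?thesis using copyR2[OF `p<z` z(1) o(2,3) m'(2) m'(1)] by blast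
    qed
  next
    fix z assume z: "p<z" "z<r" "z\<noteq>q" "cond n a p z r"
    have m: "{p,z,r} \<in> H'" using mH[OF z(1) z(2) o(3) z(4)] .
    have m': "{r,p,z} \<in> H'" "{r,p,q} \<in> H'" using m m0 by (simp_all add: insert_commute)
    show ?thesis
    proof (cases "z<q")
      case True then show ?thesis using copyR3[OF z(1) True o(2,3) m'(1) m'(2)] by blast
    next
      case False then have "q<z" using z by simp
      then show ?thesis using copyR3[OF o(1) `q<z` z(2) o(3) m'(2) m'(1)] by blast
    qed
  qed
  then show "contains_copy n (insert e (Hc n a)) 4 D2" by (simp add: H'_def)
qed

lemma Hc_card:
  assumes "0 < n"
  shows "card (Hc n a) \<le> n * a"
proof -
  define g where "g = (\<lambda>(x,d). {x, (x+d) mod n, (x+2*d+a) mod n})"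
  have "Hc n a \<subseteq> g ` ({..<n} \<times> {1..a})"
  proof
    fix e assume "e \<in> Hc n a"
    then obtain p q r where o: "p<q" "q<r" "r<n" and ee: "e = {p,q,r}" and c: "cond n a p q r"
      unfolding Hc_def by blast
    from c consider "1 \<le> q-p \<and> q-p \<le> a \<and> r-q = q-p+a" | "1 \<le> r-q \<and> r-q \<le> a \<and> n-r+p = r-q+a"
      | "1 \<le> n-r+p \<and> n-r+p \<le> a \<and> q-p = n-r+p+a" unfolding cond_def by blast
    then show "e \<in> g ` ({..<n} \<times> {1..a})"
    proof cases
      case 1
      have x1: "p + (q-p) = q" "p + 2*(q-p) + a = r" using 1 o by auto
      have "g (p, q-p) = e" using x1 o unfolding g_def ee by simp
      moreover have "(p, q-p) \<in> {..<n} \<times> {1..a}" using 1 o by auto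
      ultimately show ?thesis by (metis image_eqI)
    next
      case 2
      have x1: "q + (r-q) = r" "q + 2*(r-q) + a = n + p" using 2 o by auto
      have "g (q, r-q) = {q, r, p}" unfolding g_def using x1 o by simp
      then have "g (q, r-q) = e" unfolding ee by auto
      moreover have "(q, r-q) \<in> {..<n} \<times> {1..a}" using 2 o by auto
      ultimately show ?thesis by (metis image_eqI)
    next
      case 3
      have x1: "r + (n-r+p) = n + p" "r + 2*(n-r+p) + a = n + q" using 3 o by auto
      have "g (r, n-r+p) = {r, p, q}" unfolding g_def using x1 o by simp
      then have "g (r, n-r+p) = e" unfolding ee by auto
      moreover have "(r, n-r+p) \<in> {..<n} \<times> {1..a}" using 3 o by auto
      ultimately show ?thesis by (metis image_eqI)
    qed
  qed
  then have "card (Hc n a) \<le> card (g ` ({..<n} \<times> {1..a}))" by (intro card_mono) auto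
  also have "\<dots> \<le> card ({..<n} \<times> {1..a})" by (rule card_image_le) auto
  also have "\<dots> = n * a" by (simp add: card_cartesian_product)
  finally show ?thesis .
qed



definition Cov3 :: "nat \<Rightarrow> nat \<Rightarrow> nat \<Rightarrow> nat \<Rightarrow> nat set set" where
  "Cov3 n p q r = (\<lambda>z. {p,q,z}) ` ({..<p} \<union> {q<..<n}) \<union> (\<lambda>z. {q,r,z}) ` ({..<q} \<union> {r<..<n}) \<union> (\<lambda>z. {p,r,z}) ` {p<..<r}"

lemma card_Cov3: assumes "p<q" "q<r" "r<n" shows "card (Cov3 n p q r) \<le> 2*n-3"
proof -
  have c1: "card ({..<p} \<union> {q<..<n}) = p + (n - Suc q)"
    using assms by (subst card_Un_disjoint) auto
  have c2: "card ({..<q} \<union> {r<..<n}) = q + (n - Suc r)"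
    using assms by (subst card_Un_disjoint) auto
  have c3: "card {p<..<r} = r - Suc p" by simp
  have "card (Cov3 n p q r) \<le> card ((\<lambda>z. {p,q,z}) ` ({..<p} \<union> {q<..<n})) + card ((\<lambda>z. {q,r,z}) ` ({..<q} \<union> {r<..<n})) + card ((\<lambda>z. {p,r,z}) ` {p<..<r})"
    unfolding Cov3_def by (meson card_Un_le add_le_mono order_trans le_refl)
  also have "\<dots> \<le> card ({..<p} \<union> {q<..<n}) + card ({..<q} \<union> {r<..<n}) + card {p<..<r}"
    by (intro add_mono card_image_le) auto
  also have "\<dots> = 2*n-3" using c1 c2 c3 assms by simp
  finally show ?thesis .
qed

definition SS :: "nat \<Rightarrow> nat set set \<Rightarrow> (nat \<times> nat \<times> nat) set" where
  "SS n H = {(p,q,r). p<q \<and> q<r \<and> r<n \<and> {p,q,r} \<in> H}"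

definition CovU :: "nat \<Rightarrow> nat set set \<Rightarrow> nat set set" where
  "CovU n H = (\<Union>x\<in>SS n H. case x of (p,q,r) \<Rightarrow> Cov3 n p q r)"

lemma cov1: "p<q \<Longrightarrow> q<r \<Longrightarrow> r<n \<Longrightarrow> {p,q,r} \<in> H \<Longrightarrow> z<p \<or> (q<z \<and> z<n) \<Longrightarrow> {p,q,z} \<in> CovU n H"
  unfolding CovU_def SS_def Cov3_def by (rule UN_I[of "(p,q,r)"]) auto

lemma cov2: "p<q \<Longrightarrow> q<r \<Longrightarrow> r<n \<Longrightarrow> {p,q,r} \<in> H \<Longrightarrow> z<q \<or> (r<z \<and> z<n) \<Longrightarrow> {q,r,z} \<in> CovU n H"
  unfolding CovU_def SS_def Cov3_def by (rule UN_I[of "(p,q,r)"]) auto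

lemma cov3: "p<q \<Longrightarrow> q<r \<Longrightarrow> r<n \<Longrightarrow> {p,q,r} \<in> H \<Longrightarrow> p<z \<Longrightarrow> z<r \<Longrightarrow> {p,r,z} \<in> CovU n H"
  unfolding CovU_def SS_def Cov3_def by (rule UN_I[of "(p,q,r)"]) auto

lemma pick: "A \<in> insert e H \<Longrightarrow> B \<in> insert e H \<Longrightarrow> A \<noteq> B \<Longrightarrow> \<not>(A\<in>H \<and> B\<in>H) \<Longrightarrow>
  (A\<in>H \<Longrightarrow> B\<in>X) \<Longrightarrow> (B\<in>H \<Longrightarrow> A\<in>X) \<Longrightarrow> e\<in>X" by auto

lemma cover:
  assumes s: "saturated n 4 D2 H"
  shows "triples n \<subseteq> CovU n H"
proof
  fix e assume e: "e \<in> triples n"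
  then obtain p q r where o: "p<q" "q<r" "r<n" and ee: "e = {p,q,r}" using sort3 by blast
  show "e \<in> CovU n H"
  proof (cases "e \<in> H")
    case True
    then show ?thesis using cov1[OF o, of H r] ee o by simp
  next
    case False
    have nH: "\<not> contains_copy n H 4 D2" using s unfolding saturated_def by blast
    have "contains_copy n (insert e H) 4 D2" using s e False unfolding saturated_def by blast
    from copy_fwd[OF this] obtain P Q R T where o: "P<Q" "Q<R" "R<T" "T<n" and
      c: "(({P,Q,R}\<in>insert e H \<and> {P,Q,T}\<in>insert e H) \<or> ({Q,R,T}\<in>insert e H \<and> {P,Q,R}\<in>insert e H) \<or>
       ({P,R,T}\<in>insert e H \<and> {Q,R,T}\<in>insert e H) \<or> ({P,Q,T}\<in>insert e H \<and> {P,R,T}\<in>insert e H))" by blast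
    have d: "{P,Q,R} \<noteq> {P,Q,T}" "{Q,R,T} \<noteq> {P,Q,R}" "{P,R,T} \<noteq> {Q,R,T}" "{P,Q,T} \<noteq> {P,R,T}"
      using o by (auto simp: insert_eq_iff doubleton_eq_iff)
    have i1: "{P,Q,R} \<in> H \<Longrightarrow> {P,Q,T} \<in> CovU n H" using cov1[of P Q R n H T] o by simp
    have i2: "{P,Q,T} \<in> H \<Longrightarrow> {P,Q,R} \<in> CovU n H" using cov1[of P Q T n H R] o by simp
    have i3: "{Q,R,T} \<in> H \<Longrightarrow> {P,Q,R} \<in> CovU n H"
      using cov1[of Q R T n H P] o by (simp add: insert_commute)
    have i4: "{P,Q,R} \<in> H \<Longrightarrow> {Q,R,T} \<in> CovU n H" using cov2[of P Q R n H T] o by simp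
    have i5: "{P,R,T} \<in> H \<Longrightarrow> {Q,R,T} \<in> CovU n H"
      using cov2[of P R T n H Q] o by (simp add: insert_commute)
    have i6: "{Q,R,T} \<in> H \<Longrightarrow> {P,R,T} \<in> CovU n H"
      using cov2[of Q R T n H P] o by (simp add: insert_commute)
    have i7: "{P,Q,T} \<in> H \<Longrightarrow> {P,R,T} \<in> CovU n H"
      using cov3[of P Q T n H R] o by (simp add: insert_commute)
    have i8: "{P,R,T} \<in> H \<Longrightarrow> {P,Q,T} \<in> CovU n H"
      using cov3[of P R T n H Q] o by (simp add: insert_commute)
    have n1: "\<not> ({P,Q,R} \<in> H \<and> {P,Q,T} \<in> H)" using copyR0[OF o] nH by blast
    have n2: "\<not> ({Q,R,T} \<in> H \<and> {P,Q,R} \<in> H)" using copyR1[OF o] nH by (auto simp: insert_commute)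
    have n3: "\<not> ({P,R,T} \<in> H \<and> {Q,R,T} \<in> H)" using copyR2[OF o] nH by (auto simp: insert_commute)
    have n4: "\<not> ({P,Q,T} \<in> H \<and> {P,R,T} \<in> H)" using copyR3[OF o] nH by (auto simp: insert_commute)
    from c show ?thesis
    proof (elim disjE conjE)
      assume "{P,Q,R} \<in> insert e H" "{P,Q,T} \<in> insert e H"
      then show ?thesis using pick[OF _ _ d(1) n1 i1 i2] by blast
    next
      assume "{Q,R,T} \<in> insert e H" "{P,Q,R} \<in> insert e H"
      then show ?thesis using pick[OF _ _ d(2) n2 i3 i4] by blast
    next
      assume "{P,R,T} \<in> insert e H" "{Q,R,T} \<in> insert e H"
      then show ?thesis using pick[OF _ _ d(3) n3 i5 i6] by blast
    next
      assume "{P,Q,T} \<in> insert e H" "{P,R,T} \<in> insert e H"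
      then show ?thesis using pick[OF _ _ d(4) n4 i7 i8] by blast
    qed
  qed
qed

lemma lower_count:
  assumes s: "saturated n 4 D2 H"
  shows "n choose 3 \<le> card H * (2*n-3)"
proof -
  have "H \<subseteq> Pow {..<n}" using s unfolding saturated_def triples_def by auto
  then have fH: "finite H" by (rule finite_subset) simp
  have fS: "finite (SS n H)"
    by (rule finite_subset[of _ "{..<n} \<times> {..<n} \<times> {..<n}"]) (auto simp: SS_def)
  have fC: "\<And>x. finite (case x of (p,q,r) \<Rightarrow> Cov3 n p q r)"
    by (simp add: Cov3_def split: prod.split)
  have fU: "finite (CovU n H)" unfolding CovU_def by (rule finite_UN_I[OF fS fC])
  have "n choose 3 = card (triples n)" unfolding triples_def using n_subsets[of "{..<n}" 3] by simp
  also have "\<dots> \<le> card (CovU n H)"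
    using cover[OF s] fU by (rule card_mono[rotated])
  also have "\<dots> \<le> (\<Sum>x\<in>SS n H. card (case x of (p,q,r) \<Rightarrow> Cov3 n p q r))"
    unfolding CovU_def by (rule card_UN_le[OF fS])
  also have "\<dots> \<le> of_nat (card (SS n H)) * (2*n-3)"
    by (rule sum_bounded_above) (auto simp: SS_def intro!: card_Cov3)
  also have "\<dots> = card (SS n H) * (2*n-3)" by simp
  also have "card (SS n H) \<le> card H"
  proof (rule card_inj_on_le[OF _ _ fH])
    show "inj_on (\<lambda>(p,q,r). {p,q,r}) (SS n H)"
    proof (rule inj_onI)
      fix x y assume x: "x \<in> SS n H" and y: "y \<in> SS n H" and e: "(\<lambda>(p,q,r). {p,q,r}) x = (\<lambda>(p,q,r). {p,q,r}) y"
      obtain p q r where xx: "x = (p,q,r)" by (cases x)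
      obtain p' q' r' where yy: "y = (p',q',r')" by (cases y)
      have "p<q" "q<r" "p'<q'" "q'<r'" using x y xx yy by (auto simp: SS_def)
      moreover have "{p,q,r} = {p',q',r'}" using e xx yy by simp
      ultimately have "p=p' \<and> q=q' \<and> r=r'" by (rule sorted_unique)
      then show "x = y" using xx yy by simp
    qed
    show "(\<lambda>(p,q,r). {p,q,r}) ` SS n H \<subseteq> H" by (auto simp: SS_def)
  qed
  then have "card (SS n H) * (2*n-3) \<le> card H * (2*n-3)" by simp
  finally show ?thesis .
qed



lemma choose3: "6 * (n choose 3) = n * (n-1) * (n-2)"
proof (cases "n \<ge> 3")
  case True
  then obtain m where m: "n = m + 3" by (metis add.commute le_Suc_ex)
  have "fact 3 * fact m * ((m+3) choose 3) = (fact (m+3) :: nat)"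
    using binomial_fact_lemma[of 3 "m+3"] by simp
  moreover have "(fact (m+3)::nat) = (m+3)*(m+2)*(m+1) * fact m"
    by (simp add: fact_Suc numeral_3_eq_3 algebra_simps)
  moreover have "(fact 3 :: nat) = 6" by (simp add: fact_Suc numeral_3_eq_3)
  ultimately have "6 * ((m+3) choose 3) * fact m = (m+3)*(m+2)*(m+1) * fact m"
    by (simp add: algebra_simps)
  then have "6 * ((m+3) choose 3) = (m+3)*(m+2)*(m+1)" by simp
  then show ?thesis using m by (simp add: algebra_simps)
next
  case False
  then have "n = 0 \<or> n = 1 \<or> n = 2" by auto
  then show ?thesis by (auto simp: numeral_3_eq_3)
qed

lemma lower_real:
  fixes x h :: real
  assumes "x \<ge> 30" "x*(x-1)*(x-2) \<le> 6*h*(2*x-3)"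
  shows "x^2/12 - 1*x \<le> h"
proof (rule ccontr)
  assume "\<not> ?thesis"
  then have h: "h < x^2/12 - x" by simp
  have p: "0 < 2*x-3" using assms by simp
  have hh: "h*(2*x-3) < (x^2/12 - x)*(2*x-3)" by (rule mult_strict_right_mono[OF h p])
  have "6*h*(2*x-3) = 6*(h*(2*x-3))" by simp
  also have "\<dots> < 6*((x^2/12 - x)*(2*x-3))" using hh by linarith
  also have "\<dots> = x^3 - 27/2*x^2 + 18*x" by (simp add: field_simps power2_eq_square power3_eq_cube)
  also have "\<dots> \<le> x^3 - 3*x^2 + 2*x"
  proof -
    have "0 \<le> x * (21/2*x - 16)" using assms by simp
    then show ?thesis by (simp add: algebra_simps power2_eq_square)
  qed
  also have "\<dots> = x*(x-1)*(x-2)" by (simp add: algebra_simps power2_eq_square power3_eq_cube)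
  finally show False using assms(2) by simp
qed

theorem propositionA7:
  shows "\<exists>C::real. \<exists>N::nat. \<forall>n\<ge>N.
           real n ^ 2 / 12 - C * real n \<le> real (sat_cyc n 4 D2) \<and>
           real (sat_cyc n 4 D2) \<le> 5 * real n ^ 2 / 24 + C * real n"
proof (intro exI allI impI)
  fix n :: nat assume n: "30 \<le> n"
  define a where "a = (n+5) div 6"
  have a: "1 \<le> a" "5*a < n" "n \<le> 6*a" "6*a \<le> n+5" using n unfolding a_def by arith+
  have sat: "saturated n 4 D2 (Hc n a)" using Hc_sat[OF a(1-3)] .
  define P where "P = (\<lambda>m. \<exists>H. saturated n 4 D2 H \<and> card H = m)"
  have P1: "P (card (Hc n a))" unfolding P_def using sat by blast
  have le: "sat_cyc n 4 D2 \<le> card (Hc n a)"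
    unfolding sat_cyc_def P_def[symmetric] by (rule Least_le[of P, OF P1])
  have "P (sat_cyc n 4 D2)" unfolding sat_cyc_def P_def[symmetric] by (rule LeastI[of P, OF P1])
  then obtain H0 where H0: "saturated n 4 D2 H0" "card H0 = sat_cyc n 4 D2" unfolding P_def by blast
  have lc: "n choose 3 \<le> card H0 * (2*n-3)" by (rule lower_count[OF H0(1)])
  then have "6 * (n choose 3) \<le> 6 * (card H0 * (2*n-3))" by simp
  then have "n * (n-1) * (n-2) \<le> 6 * card H0 * (2*n-3)" unfolding choose3 by (simp add: mult.assoc)
  then have "real (n * (n-1) * (n-2)) \<le> real (6 * card H0 * (2*n-3))" by (simp only: of_nat_le_iff)
  then have r: "real n * (real n - 1) * (real n - 2) \<le> 6 * real (card H0) * (2 * real n - 3)"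
    using n by (simp add: of_nat_diff)
  have low: "real n ^ 2 / 12 - 1 * real n \<le> real (sat_cyc n 4 D2)"
    using lower_real[OF _ r] n H0(2) by simp
  have "card (Hc n a) \<le> n * a" using Hc_card n by simp
  then have u: "sat_cyc n 4 D2 \<le> n * a" using le by simp
  have "6 * (n*a) \<le> n * (n+5)" using a(4) by (metis mult.left_commute mult_le_mono2)
  then have "real (6 * (n*a)) \<le> real (n * (n+5))" by (simp only: of_nat_le_iff)
  then have e1: "6 * (real a * real n) \<le> real n * real n + 5 * real n" by (simp add: algebra_simps)
  have "real (sat_cyc n 4 D2) \<le> real (n * a)" using u by (simp only: of_nat_le_iff)
  then have e2: "real (sat_cyc n 4 D2) \<le> real a * real n" by (simp add: mult.commute)
  have e3: "real n ^ 2 = real n * real n" by (simp add: power2_eq_square)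
  have e4: "0 \<le> real n * real n" by simp
  have up: "real (sat_cyc n 4 D2) \<le> 5 * real n ^ 2 / 24 + 1 * real n"
    unfolding e3 using e1 e2 e4 by linarith
  show "real n ^ 2 / 12 - 1 * real n \<le> real (sat_cyc n 4 D2) \<and>
           real (sat_cyc n 4 D2) \<le> 5 * real n ^ 2 / 24 + 1 * real n" using low up by blast
qed


end
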